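(* The theory $\mathsf{Seq}$ is an extension of the theory $\mathsf{WSeq}$: for every $\mathcal{L}$-formula $\phi$, if $\mathsf{WSeq}\vdash\phi$ then $\mathsf{Seq}\vdash\phi$.
   Context: $\mathcal{L}=\{e,\vdash,\circ\}$ with $e$ a constant and $\vdash$ (infix), $\circ$ binary function symbols. $\mathsf{Seq}$ has axioms: ($\mathsf{Seq}_1$) $\forall xy[x\vdash y\neq e]$; ($\mathsf{Seq}_2$) $\forall x_1x_2y_1y_2[x_1\vdash x_2=y_1\vdash y_2\rightarrow(x_1=y_1\wedge x_2=y_2)]$; ($\mathsf{Seq}_3$) $\forall x[x\circ e=x]$; ($\mathsf{Seq}_4$) $\forall xyz[x\circ(y\vdash z)=(x\circ y)\vdash z]$; ($\mathsf{Seq}_5$) $\forall x[x=e\vee\exists yz[x=y\vdash z]]$. Sequences: $()$ is a sequence, and for $n>0$, if $s_1,\ldots,s_n$ are sequences then $(s_1,\ldots,s_n)$ is one. Sequerals: $\overline{()}=e$, $\overline{(s_1,\ldots,s_n)}=(\ldots((e\vdash\overline{s_1})\vdash\overline{s_2})\ldots)\vdash\overline{s_n}$. $x\sqsubseteq t$ abbreviates $\exists y[x\circ y=t]$. $\mathsf{WSeq}$ has axiom schemes: ($\mathsf{WSeq}_1$) $\overline{s}\neq\overline{t}$ for distinct sequences $s,t$; ($\mathsf{WSeq}_2$) $\overline{(s_1,\ldots,s_n)}\circ\overline{(t_1,\ldots,t_m)}=\overline{(s_1,\ldots,s_n,t_1,\ldots,t_m)}$; ($\mathsf{WSeq}_3$)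 $\forall x[x\sqsubseteq\overline{s}\rightarrow\bigvee_{t\in I(s)}x=\overline{t}]$ where $I(s)$ is the set of initial segments of $s$. *)

theory Defs
  imports Main
begin

datatype trm = Var nat | E | Turn trm trm | Comp trm trm

datatype fm =
    Eq trm trm
  | Bot
  | Neg fm
  | Conj fm fm
  | Disj fm fm
  | Imp fm fm
  | All nat fm
  | Ex nat fm

datatype 'a struct = Struct (s_e: 'a) (s_turn: "'a \<Rightarrow> 'a \<Rightarrow> 'a") (s_comp: "'a \<Rightarrow> 'a \<Rightarrow> 'a")

fun eval_trm :: "'a struct \<Rightarrow> (nat \<Rightarrow> 'a) \<Rightarrow> trm \<Rightarrow> 'a" where
  "eval_trm M v (Var n) = v n"
| "eval_trm M v E = s_e M"
| "eval_trm M v (Turn s t) = s_turn M (eval_trm M v s) (eval_trm M v t)"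
| "eval_trm M v (Comp s t) = s_comp M (eval_trm M v s) (eval_trm M v t)"

fun sat :: "'a struct \<Rightarrow> (nat \<Rightarrow> 'a) \<Rightarrow> fm \<Rightarrow> bool" where
  "sat M v (Eq s t) = (eval_trm M v s = eval_trm M v t)"
| "sat M v Bot = False"
| "sat M v (Neg p) = (\<not> sat M v p)"
| "sat M v (Conj p q) = (sat M v p \<and> sat M v q)"
| "sat M v (Disj p q) = (sat M v p \<or> sat M v q)"
| "sat M v (Imp p q) = (sat M v p \<longrightarrow> sat M v q)"
| "sat M v (All x p) = (\<forall>a. sat M (v(x := a)) p)"
| "sat M v (Ex x p) = (\<exists>a. sat M (v(x := a)) p)"

definition holds :: "'a struct \<Rightarrow> fm \<Rightarrow> bool" where
  "holds M p \<longleftrightarrow> (\<forall>v. sat M v p)"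

definition is_model :: "'a struct \<Rightarrow> fm set \<Rightarrow> bool" where
  "is_model M T \<longleftrightarrow> (\<forall>p\<in>T. holds M p)"

text \<open>Semantic consequence over structures with carrier type 'a
  (by Goedel completeness, this is the meaning of T |- p).\<close>
definition entails :: "'a itself \<Rightarrow> fm set \<Rightarrow> fm \<Rightarrow> bool" where
  "entails _ T p \<longleftrightarrow> (\<forall>M :: 'a struct. is_model M T \<longrightarrow> holds M p)"

definition Seq_ax :: "fm set" where
  "Seq_ax = {
     All 0 (All 1 (Neg (Eq (Turn (Var 0) (Var 1)) E))),
     All 0 (All 1 (All 2 (All 3
       (Imp (Eq (Turn (Var 0) (Var 1)) (Turn (Var 2) (Var 3)))
            (Conj (Eq (Var 0) (Var 2)) (Eq (Var 1) (Var 3))))))),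
     All 0 (Eq (Comp (Var 0) E) (Var 0)),
     All 0 (All 1 (All 2
       (Eq (Comp (Var 0) (Turn (Var 1) (Var 2))) (Turn (Comp (Var 0) (Var 1)) (Var 2))))),
     All 0 (Disj (Eq (Var 0) E) (Ex 1 (Ex 2 (Eq (Var 0) (Turn (Var 1) (Var 2))))))
   }"

datatype sq = Sq "sq list"

fun sequeral :: "sq \<Rightarrow> trm" where
  "sequeral (Sq xs) = foldl Turn E (map sequeral xs)"

definition init_segs :: "sq \<Rightarrow> sq list" where
  "init_segs s = (case s of Sq xs \<Rightarrow> map (\<lambda>k. Sq (take k xs)) [0..<Suc (length xs)])"

definition big_disj :: "fm list \<Rightarrow> fm" where
  "big_disj ps = foldr Disj ps Bot"

text \<open>x \<sqsubseteq> t abbreviates Ex y [x o y = t]; here x = Var 0, y = Var 1 (t closed).\<close>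
definition WSeq_ax :: "fm set" where
  "WSeq_ax =
     {Neg (Eq (sequeral s) (sequeral t)) | s t. s \<noteq> t}
   \<union> {Eq (Comp (sequeral (Sq ss)) (sequeral (Sq ts))) (sequeral (Sq (ss @ ts))) | ss ts. True}
   \<union> {All 0 (Imp (Ex 1 (Eq (Comp (Var 0) (Var 1)) (sequeral s)))
                  (big_disj (map (\<lambda>t. Eq (Var 0) (sequeral t)) (init_segs s)))) | s. True}"

end

theory Submission
  imports Defs
begin

lemma seq_val: "eval_trm M v (sequeral (Sq xs)) = foldl (s_turn M) (s_e M) (map (\<lambda>x. eval_trm M v (sequeral x)) xs)"
proof -
  have "\<And>a. eval_trm M v (foldl Turn a (map sequeral xs)) = foldl (s_turn M) (eval_trm M v a) (map (\<lambda>x. eval_trm M v (sequeral x)) xs)"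
    by (induction xs) auto
  then show ?thesis by simp
qed

declare sequeral.simps[simp del]

lemma seq_indep: "eval_trm M v (sequeral s) = eval_trm M w (sequeral s)"
proof (induction s)
  case (Sq xs)
  then have "map (\<lambda>x. eval_trm M v (sequeral x)) xs = map (\<lambda>x. eval_trm M w (sequeral x)) xs"
    by auto
  then show ?case unfolding seq_val by (rule arg_cong)
qed

lemma sat_big_disj: "sat M v (big_disj ps) = (\<exists>p\<in>set ps. sat M v p)"
  unfolding big_disj_def by (induction ps) auto

locale seqm =
  fixes M :: "'a struct"
  assumes s1: "\<And>x y. s_turn M x y \<noteq> s_e M"
    and s2: "\<And>a b c d. s_turn M a b = s_turn M c d \<Longrightarrow> a = c \<and> b = d"
    and s3: "\<And>x. s_comp M x (s_e M) = x"
    and s4: "\<And>x y z. s_comp M x (s_turn M y z) = s_turn M (s_comp M x y) z"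
    and s5: "\<And>x. x = s_e M \<or> (\<exists>y z. x = s_turn M y z)"
begin

lemma s1'[simp]: "s_e M \<noteq> s_turn M x y" using s1[of x y] by metis
lemma s1''[simp]: "s_turn M x y \<noteq> s_e M" using s1[of x y] by metis
lemma turn_eq[simp]: "(s_turn M a b = s_turn M c d) = (a = c \<and> b = d)" using s2 by blast

lemma foldl_inj:
  assumes "\<forall>x\<in>set xs. \<forall>y. f x = f y \<longrightarrow> x = y"
    and "foldl (s_turn M) (s_e M) (map f xs) = foldl (s_turn M) (s_e M) (map f ys)"
  shows "xs = ys"
  using assms
proof (induction xs arbitrary: ys rule: rev_induct)
  case Nil
  then show ?case
    by (cases ys rule: rev_exhaust) (auto simp: s1')
next
  case (snoc x xs)
  show ?case
  proof (cases ys rule: rev_exhaust)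
    case Nil
    then show ?thesis using snoc.prems by auto
  next
    case (snoc ys' y)
    with snoc.prems have "foldl (s_turn M) (s_e M) (map f xs) = foldl (s_turn M) (s_e M) (map f ys')"
      and "f x = f y" by auto
    then show ?thesis using snoc.IH snoc.prems snoc by auto
  qed
qed

lemma val_inj: "eval_trm M v (sequeral s) = eval_trm M v (sequeral t) \<Longrightarrow> s = t"
proof (induction s arbitrary: t)
  case (Sq xs)
  obtain ys where t: "t = Sq ys" by (cases t)
  show ?case using foldl_inj[of xs "\<lambda>x. eval_trm M v (sequeral x)" ys] Sq t
    by (auto simp: seq_val)
qed

lemma val_app: "s_comp M (eval_trm M v (sequeral (Sq ss))) (eval_trm M v (sequeral (Sq ts)))
   = eval_trm M v (sequeral (Sq (ss @ ts)))"
  by (induction ts rule: rev_induct) (auto simp: seq_val s3 s4)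

lemma val_init: "s_comp M x y = eval_trm M v (sequeral (Sq xs)) \<Longrightarrow>
   \<exists>k\<le>length xs. x = eval_trm M v (sequeral (Sq (take k xs)))"
proof (induction xs arbitrary: y rule: rev_induct)
  case Nil
  then show ?case
    using s5[of y] s3 s4 by (auto simp: seq_val)
next
  case (snoc z xs)
  show ?case
  proof (cases "y = s_e M")
    case True
    then show ?thesis using snoc.prems s3 by (intro exI[of _ "Suc (length xs)"]) auto
  next
    case False
    then obtain y1 y2 where "y = s_turn M y1 y2" using s5 by blast
    with snoc.prems have "s_comp M x y1 = eval_trm M v (sequeral (Sq xs))"
      using s4 by (auto simp: seq_val)
    then obtain k where "k \<le> length xs" "x = eval_trm M v (sequeral (Sq (take k xs)))"
      using snoc.IH by blast
    then show ?thesis by (intro exI[of _ k]) auto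
  qed
qed

end

lemma model_seqm:
  assumes "is_model M Seq_ax" shows "seqm M"
proof -
  have h: "\<And>p. p \<in> Seq_ax \<Longrightarrow> sat M v p" for v using assms unfolding is_model_def holds_def by blast
  have a1: "sat M v (All 0 (All 1 (Neg (Eq (Turn (Var 0) (Var 1)) E))))" for v
    by (rule h) (unfold Seq_ax_def, rule insertI1)
  have a2: "sat M v (All 0 (All 1 (All 2 (All 3
       (Imp (Eq (Turn (Var 0) (Var 1)) (Turn (Var 2) (Var 3)))
            (Conj (Eq (Var 0) (Var 2)) (Eq (Var 1) (Var 3))))))))" for v
    by (rule h) (unfold Seq_ax_def, rule insertI2, rule insertI1)
  have a3: "sat M v (All 0 (Eq (Comp (Var 0) E) (Var 0)))" for v
    by (rule h) (unfold Seq_ax_def, rule insertI2, rule insertI2, rule insertI1)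
  have a4: "sat M v (All 0 (All 1 (All 2
       (Eq (Comp (Var 0) (Turn (Var 1) (Var 2))) (Turn (Comp (Var 0) (Var 1)) (Var 2))))))" for v
    by (rule h) (unfold Seq_ax_def, rule insertI2, rule insertI2, rule insertI2, rule insertI1)
  have a5: "sat M v (All 0 (Disj (Eq (Var 0) E) (Ex 1 (Ex 2 (Eq (Var 0) (Turn (Var 1) (Var 2)))))))" for v
    by (rule h) (unfold Seq_ax_def, rule insertI2, rule insertI2, rule insertI2, rule insertI2, rule insertI1)
  have i2: "\<forall>a b c d. s_turn M a b = s_turn M c d \<longrightarrow> a = c \<and> b = d"
    using a2[of undefined, simplified] by blast
  show ?thesis
  proof
    fix x y show "s_turn M x y \<noteq> s_e M" using a1[of undefined] by simp
  next
    fix a b c d assume "s_turn M a b = s_turn M c d"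
    then show "a = c \<and> b = d" using i2 by blast
  next
    fix x show "s_comp M x (s_e M) = x" using a3[of undefined] by simp
  next
    fix x y z show "s_comp M x (s_turn M y z) = s_turn M (s_comp M x y) z"
      using a4[of undefined] by simp
  next
    fix x show "x = s_e M \<or> (\<exists>y z. x = s_turn M y z)"
      using a5[of undefined] by simp
  qed
qed

lemma seq_wseq:
  assumes "is_model M Seq_ax" shows "is_model M WSeq_ax"
proof -
  interpret seqm M using model_seqm[OF assms] .
  show ?thesis unfolding is_model_def holds_def
  proof (intro ballI allI)
    fix p v assume "p \<in> WSeq_ax"
    then consider (a) s t where "p = Neg (Eq (sequeral s) (sequeral t))" "s \<noteq> t"
      | (b) ss ts where "p = Eq (Comp (sequeral (Sq ss)) (sequeral (Sq ts))) (sequeral (Sq (ss @ ts)))"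
      | (c) s where "p = All 0 (Imp (Ex 1 (Eq (Comp (Var 0) (Var 1)) (sequeral s)))
                  (big_disj (map (\<lambda>t. Eq (Var 0) (sequeral t)) (init_segs s))))"
      unfolding WSeq_ax_def by blast
    then show "sat M v p"
    proof cases
      case a then show ?thesis using val_inj by auto
    next
      case b then show ?thesis using val_app by auto
    next
      case c
      obtain xs where s: "s = Sq xs" by (cases s)
      have "\<forall>a. (\<exists>b. s_comp M a b = eval_trm M (v(0 := a, 1 := b)) (sequeral s)) \<longrightarrow>
         (\<exists>t\<in>set (init_segs s). a = eval_trm M (v(0 := a)) (sequeral t))"
      proof (intro allI impI)
        fix a
        assume "\<exists>b. s_comp M a b = eval_trm M (v(0 := a, 1 := b)) (sequeral s)"
        then obtain b where "s_comp M a b = eval_trm M (v(0 := a, 1 := b)) (sequeral s)" by blast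
        then obtain k where k: "k \<le> length xs" and ak: "a = eval_trm M (v(0 := a)) (sequeral (Sq (take k xs)))"
          using val_init s seq_indep by metis
        have "Sq (take k xs) \<in> set (init_segs s)" unfolding s init_segs_def using k
          by (auto simp del: upt_Suc intro!: image_eqI[of _ _ k])
        then show "\<exists>t\<in>set (init_segs s). a = eval_trm M (v(0 := a)) (sequeral t)"
          using ak by blast
      qed
      then show ?thesis unfolding c by (simp add: sat_big_disj)
    qed
  qed
qed

theorem theorem3:
  fixes \<phi> :: fm
  assumes "entails TYPE('a) WSeq_ax \<phi>"
  shows "entails TYPE('a) Seq_ax \<phi>"
  using assms seq_wseq unfolding entails_def by blast

end
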